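(* In system $\mathscr{E}$: if $\Phi\triangleright\Gamma\vdash^{(b,e,m,f)}t:\sigma$ and $t\to_h t'$ by a step of kind $\mathcal{R}\in\{b,e,m\}$, then there is $\Phi'\triangleright\Gamma\vdash^{(b',e',m',f)}t':\sigma$ where: if $\mathcal{R}=b$ then $b'=b-1$, $e'=e$, $m'=m$; if $\mathcal{R}=e$ then $b'=b$, $e'=e-1$, $m'=m$; if $\mathcal{R}=m$ then $b'=b$, $e'=e$, $m'=m-1$.
   Context: Pair pattern calculus: patterns $p,q ::= x\mid\langle p,q\rangle$ (linear); $\mathrm{var}(p)$ = variables of $p$; $p\# q$ means disjoint variables. Terms $t,u ::= x\mid\lambda p.t\mid\langle t,u\rangle\mid t\,u\mid t[p/u]$, $\mathrm{var}(p)$ bound in $t$ in $\lambda p.t$ and $t[p/u]$; $\mathrm{fv}$ as usual; terms modulo $\alpha$. List contexts $L::=\Box\mid L[p/u]$, $L\langle t\rangle$ plugging (possibly capturing), $\mathrm{bv}(L)$ variables bound by $L$; $t\{x/u\}$ capture-avoiding substitution; $\mathrm{abs}(t)$ iff $t=L\langle\lambda p.u\rangle$. Head reduction ($t\not\to_h$: no $u$ with $t\to_h u$): (b) $L\langle\lambda p.t\rangle u\to_h L\langle t[p/u]\rangle$ if $\mathrm{bv}(L)\cap\mathrm{fv}(u)=\emptyset$; (m) $t[\langle p_1,p_2\rangle/L\langle\langle u_1,u_2\rangle\rangle]\to_h L\langle t[p_1/u_1][p_2/u_2]\rangle$ if $t\not\to_h$ and $\mathrm{bv}(L)\cap\mathrm{fv}(t)=\emptyset$;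 (e) $t[x/u]\to_h t\{x/u\}$ if $t\not\to_h$; closure: $\lambda p.t\to_h\lambda p.t'$ if $t\to_h t'$; $tu\to_h t'u$ if $t\to_h t'$ and not $\mathrm{abs}(t)$; $t[p/u]\to_h t'[p/u]$ if $t\to_h t'$; $t[p/u]\to_h t[p/u']$ if $t\not\to_h$, $p$ not a variable, $u\to_h u'$. The kind of a step is the base rule (b), (e) or (m) it uses. System $\mathscr{E}$. Types: tight types $\mathtt{t} ::= \bullet_{\mathcal{N}}\mid\bullet_{\mathcal{M}}$; types $\sigma ::= \mathtt{t}\mid \mathcal{A}_1\times\mathcal{A}_2\mid \mathcal{A}\to\sigma$; multi-types $\mathcal{A} ::= [\sigma_k]_{k\in K}$ (finite, possibly empty). Contexts map variables to multi-types, $\mathrm{dom}(\Gamma)$ = variables with non-empty multi-type; $\wedge$ pointwise multiset union; $\Gamma|_p$ restriction to $\mathrm{var}(p)$; $\Gamma\setminus\mathrm{var}(p)$ removal. $\mathrm{tight}(\sigma)$ iff $\sigma\in\{\bullet_{\mathcal{N}},\bullet_{\mathcal{M}}\}$, extended elementwise. Rules: (pat_v) $x:\mathcal{A}\Vdash^{(1,0,0)} x:\mathcal{A}$. (pat_×) from $\Gamma\Vdash^{(e_p,m_p,f_p)}p:\mathcal{A}$, $\Delta\Vdash^{(e_q,m_q,f_q)}q:\mathcal{B}$, $p\#q$ infer $\Gamma\wedge\Delta\Vdash^{(e_p+e_q,1+m_p+m_q,f_p+f_q)}\langle p,q\rangle:[\mathcal{A}\times\mathcal{B}]$. (pat_p)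 if $\mathrm{dom}(\Gamma)\subseteq\mathrm{var}(\langle p,q\rangle)$ and $\mathrm{tight}(\Gamma)$ then $\Gamma\Vdash^{(0,0,1)}\langle p,q\rangle:[\bullet_{\mathcal{N}}]$. (ax) $x:[\sigma]\vdash^{(0,0,0,0)}x:\sigma$. (abs) from $\Gamma\vdash^{(b,e,m,f)}t:\sigma$ and $\Gamma|_p\Vdash^{(e_p,m_p,f_p)}p:\mathcal{A}$ infer $\Gamma\setminus\mathrm{var}(p)\vdash^{(b+1,e+e_p,m+m_p,f+f_p)}\lambda p.t:\mathcal{A}\to\sigma$. (abs_p) from $\Gamma\vdash^{(b,e,m,f)}t:\mathtt{t}$ ($\mathtt{t}$ tight) and $\mathrm{tight}(\Gamma|_p)$ infer $\Gamma\setminus\mathrm{var}(p)\vdash^{(b,e,m,f+1)}\lambda p.t:\bullet_{\mathcal{M}}$. (many) from $(\Gamma_k\vdash^{(b_k,e_k,m_k,f_k)}t:\sigma_k)_{k\in K}$ infer $\wedge_k\Gamma_k\vdash^{(\sum b_k,\sum e_k,\sum m_k,\sum f_k)}t:[\sigma_k]_{k\in K}$. (app) from $\Gamma\vdash^{(b_t,e_t,m_t,f_t)}t:\mathcal{A}\to\sigma$, $\Delta\vdash^{(b_u,e_u,m_u,f_u)}u:\mathcal{A}$ infer $\Gamma\wedge\Delta\vdash^{(b_t+b_u,e_t+e_u,m_t+m_u,f_t+f_u)}t\,u:\sigma$. (app_p) from $\Gamma\vdash^{(b,e,m,f)}t:\bullet_{\mathcal{N}}$ infer $\Gamma\vdash^{(b,e,m,f+1)}t\,u:\bullet_{\mathcal{N}}$.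 (pair) from $\Gamma\vdash^{(b_t,e_t,m_t,f_t)}t:\mathcal{A}$, $\Delta\vdash^{(b_u,e_u,m_u,f_u)}u:\mathcal{B}$ infer $\Gamma\wedge\Delta\vdash^{(b_t+b_u,e_t+e_u,m_t+m_u,f_t+f_u)}\langle t,u\rangle:\mathcal{A}\times\mathcal{B}$. (pair_p) $\vdash^{(0,0,0,1)}\langle t,u\rangle:\bullet_{\mathcal{M}}$. (match) from $\Gamma\vdash^{(b_t,e_t,m_t,f_t)}t:\sigma$, $\Gamma|_p\Vdash^{(e_p,m_p,f_p)}p:\mathcal{A}$, $\Delta\vdash^{(b_u,e_u,m_u,f_u)}u:\mathcal{A}$ infer $(\Gamma\setminus\mathrm{var}(p))\wedge\Delta\vdash^{(b_t+b_u,e_t+e_u+e_p,m_t+m_u+m_p,f_t+f_u+f_p)}t[p/u]:\sigma$. *)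

theory Defs
  imports Main "HOL-Library.Multiset"
begin

type_synonym var = nat

datatype pat = PV var | PP pat pat

datatype trm = TVar var | TLam pat trm | TApp trm trm | TPair trm trm
  | TSub trm pat trm   (* TSub t p u  stands for  t[p/u] *)

primrec pvars :: "pat \<Rightarrow> var set" where
  "pvars (PV x) = {x}"
| "pvars (PP p q) = pvars p \<union> pvars q"

primrec linear :: "pat \<Rightarrow> bool" where
  "linear (PV x) = True"
| "linear (PP p q) = (linear p \<and> linear q \<and> pvars p \<inter> pvars q = {})"

primrec wf_trm :: "trm \<Rightarrow> bool" where
  "wf_trm (TVar x) = True"
| "wf_trm (TLam p t) = (linear p \<and> wf_trm t)"
| "wf_trm (TApp t u) = (wf_trm t \<and> wf_trm u)"
| "wf_trm (TPair t u) = (wf_trm t \<and> wf_trm u)"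
| "wf_trm (TSub t p u) = (wf_trm t \<and> linear p \<and> wf_trm u)"

primrec fv :: "trm \<Rightarrow> var set" where
  "fv (TVar x) = {x}"
| "fv (TLam p t) = fv t - pvars p"
| "fv (TApp t u) = fv t \<union> fv u"
| "fv (TPair t u) = fv t \<union> fv u"
| "fv (TSub t p u) = (fv t - pvars p) \<union> fv u"

primrec bv :: "trm \<Rightarrow> var set" where
  "bv (TVar x) = {}"
| "bv (TLam p t) = pvars p \<union> bv t"
| "bv (TApp t u) = bv t \<union> bv u"
| "bv (TPair t u) = bv t \<union> bv u"
| "bv (TSub t p u) = pvars p \<union> bv t \<union> bv u"

primrec pperm :: "(var \<Rightarrow> var) \<Rightarrow> pat \<Rightarrow> pat" where
  "pperm \<pi> (PV x) = PV (\<pi> x)"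
| "pperm \<pi> (PP p q) = PP (pperm \<pi> p) (pperm \<pi> q)"

primrec perm :: "(var \<Rightarrow> var) \<Rightarrow> trm \<Rightarrow> trm" where
  "perm \<pi> (TVar x) = TVar (\<pi> x)"
| "perm \<pi> (TLam p t) = TLam (pperm \<pi> p) (perm \<pi> t)"
| "perm \<pi> (TApp t u) = TApp (perm \<pi> t) (perm \<pi> u)"
| "perm \<pi> (TPair t u) = TPair (perm \<pi> t) (perm \<pi> u)"
| "perm \<pi> (TSub t p u) = TSub (perm \<pi> t) (pperm \<pi> p) (perm \<pi> u)"

text \<open>Alpha-equivalence (nominal style: bound pattern variables renamed by a permutation
  fixing the other free variables of the body).\<close>
inductive alpha :: "trm \<Rightarrow> trm \<Rightarrow> bool" where
  a_var: "alpha (TVar x) (TVar x)"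
| a_lam: "\<lbrakk> bij \<pi>; \<forall>x \<in> fv t - pvars p. \<pi> x = x; pperm \<pi> p = p'; alpha (perm \<pi> t) t' \<rbrakk>
           \<Longrightarrow> alpha (TLam p t) (TLam p' t')"
| a_app: "\<lbrakk> alpha t t'; alpha u u' \<rbrakk> \<Longrightarrow> alpha (TApp t u) (TApp t' u')"
| a_pair: "\<lbrakk> alpha t t'; alpha u u' \<rbrakk> \<Longrightarrow> alpha (TPair t u) (TPair t' u')"
| a_sub: "\<lbrakk> bij \<pi>; \<forall>x \<in> fv t - pvars p. \<pi> x = x; pperm \<pi> p = p'; alpha (perm \<pi> t) t';
            alpha u u' \<rbrakk> \<Longrightarrow> alpha (TSub t p u) (TSub t' p' u')"

text \<open>Naive substitution t{x/u}; it is capture-avoiding whenever bv t is disjoint from fv u and x.\<close>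
primrec nsubst :: "trm \<Rightarrow> var \<Rightarrow> trm \<Rightarrow> trm" where
  "nsubst (TVar y) x u = (if y = x then u else TVar y)"
| "nsubst (TLam p t) x u = TLam p (nsubst t x u)"
| "nsubst (TApp t s) x u = TApp (nsubst t x u) (nsubst s x u)"
| "nsubst (TPair t s) x u = TPair (nsubst t x u) (nsubst s x u)"
| "nsubst (TSub t p s) x u = TSub (nsubst t x u) p (nsubst s x u)"

text \<open>List contexts L ::= Box | L[p/u], represented as lists (innermost substitution first).\<close>
type_synonym lctx = "(pat \<times> trm) list"

definition plug :: "lctx \<Rightarrow> trm \<Rightarrow> trm" where
  "plug L t = foldl (\<lambda>a (p, u). TSub a p u) t L"

definition bvL :: "lctx \<Rightarrow> var set" where
  "bvL L = (\<Union>(p, u) \<in> set L. pvars p)"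

definition is_abs :: "trm \<Rightarrow> bool" where
  "is_abs t = (\<exists>L p s. t = plug L (TLam p s))"

definition is_pvar :: "pat \<Rightarrow> bool" where
  "is_pvar p = (\<exists>x. p = PV x)"

datatype kind = KB | KE | KM

text \<open>hsteps t = the set of all (R, t'') with t ->_h t' by a step of kind R and t'' alpha-equivalent to t'.
  Defined by structural recursion following the stratified definition of the paper; the side
  conditions on bound variables are imposed on some alpha-variant of the redex.
  "t does not reduce" is  hsteps t = {}.\<close>
primrec hsteps :: "trm \<Rightarrow> (kind \<times> trm) set" where
  "hsteps (TVar x) = {}"
| "hsteps (TLam p t) = {(k, r). \<exists>t'. (k, t') \<in> hsteps t \<and> alpha r (TLam p t')}"
| "hsteps (TApp t u) =
     {(k, r). k = KB \<and> (\<exists>L p s u'. alpha (TApp t u) (TApp (plug L (TLam p s)) u')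
                         \<and> bvL L \<inter> fv u' = {} \<and> alpha r (plug L (TSub s p u')))}
   \<union> {(k, r). \<not> is_abs t \<and> (\<exists>t'. (k, t') \<in> hsteps t \<and> alpha r (TApp t' u))}"
| "hsteps (TPair t u) = {}"
| "hsteps (TSub t p u) =
     {(k, r). \<exists>t'. (k, t') \<in> hsteps t \<and> alpha r (TSub t' p u)}
   \<union> (if hsteps t = {} then
        {(k, r). k = KM \<and> (\<exists>s p1 p2 L u1 u2.
             alpha (TSub t p u) (TSub s (PP p1 p2) (plug L (TPair u1 u2)))
             \<and> bvL L \<inter> fv s = {} \<and> pvars p2 \<inter> fv u1 = {}
             \<and> alpha r (plug L (TSub (TSub s p1 u1) p2 u2)))}
      \<union> {(k, r). k = KE \<and> (\<exists>x t0. p = PV x \<and> alpha t t0 \<and> bv t0 \<inter> (fv u \<union> {x}) = {}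
             \<and> alpha r (nsubst t0 x u))}
      \<union> {(k, r). \<not> is_pvar p \<and> (\<exists>u'. (k, u') \<in> hsteps u \<and> alpha r (TSub t p u'))}
      else {})"

datatype ty = TyN | TyM | Prod "ty multiset" "ty multiset" | Arr "ty multiset" ty

definition tight :: "ty \<Rightarrow> bool" where
  "tight \<sigma> = (\<sigma> = TyN \<or> \<sigma> = TyM)"

type_synonym ctx = "var \<Rightarrow> ty multiset"

definition ctx_empty :: ctx where "ctx_empty = (\<lambda>_. {#})"
definition ctx_one :: "var \<Rightarrow> ty multiset \<Rightarrow> ctx" where
  "ctx_one x A = (\<lambda>y. if y = x then A else {#})"
definition ctx_union :: "ctx \<Rightarrow> ctx \<Rightarrow> ctx" where
  "ctx_union \<Gamma> \<Delta> = (\<lambda>x. \<Gamma> x + \<Delta> x)"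
definition ctx_dom :: "ctx \<Rightarrow> var set" where
  "ctx_dom \<Gamma> = {x. \<Gamma> x \<noteq> {#}}"
definition restrict :: "ctx \<Rightarrow> pat \<Rightarrow> ctx" where
  "restrict \<Gamma> p = (\<lambda>x. if x \<in> pvars p then \<Gamma> x else {#})"
definition remove :: "ctx \<Rightarrow> pat \<Rightarrow> ctx" where
  "remove \<Gamma> p = (\<lambda>x. if x \<in> pvars p then {#} else \<Gamma> x)"
definition tight_ctx :: "ctx \<Rightarrow> bool" where
  "tight_ctx \<Gamma> = (\<forall>x. \<forall>\<sigma> \<in># \<Gamma> x. tight \<sigma>)"

inductive ptyp :: "ctx \<Rightarrow> pat \<Rightarrow> ty multiset \<Rightarrow> nat \<Rightarrow> nat \<Rightarrow> nat \<Rightarrow> bool" where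
  pat_v: "ptyp (ctx_one x A) (PV x) A 1 0 0"
| pat_prod: "\<lbrakk> ptyp \<Gamma> p A ep mp fp; ptyp \<Delta> q B eq mq fq; pvars p \<inter> pvars q = {} \<rbrakk>
     \<Longrightarrow> ptyp (ctx_union \<Gamma> \<Delta>) (PP p q) {#Prod A B#} (ep + eq) (Suc (mp + mq)) (fp + fq)"
| pat_p: "\<lbrakk> ctx_dom \<Gamma> \<subseteq> pvars (PP p q); tight_ctx \<Gamma> \<rbrakk> \<Longrightarrow> ptyp \<Gamma> (PP p q) {#TyN#} 0 0 1"

inductive has_type :: "ctx \<Rightarrow> trm \<Rightarrow> ty \<Rightarrow> nat \<Rightarrow> nat \<Rightarrow> nat \<Rightarrow> nat \<Rightarrow> bool"
  and has_mtype :: "ctx \<Rightarrow> trm \<Rightarrow> ty multiset \<Rightarrow> nat \<Rightarrow> nat \<Rightarrow> nat \<Rightarrow> nat \<Rightarrow> bool" where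
  ax: "has_type (ctx_one x {#\<sigma>#}) (TVar x) \<sigma> 0 0 0 0"
| abs: "\<lbrakk> has_type \<Gamma> t \<sigma> b e m f; ptyp (restrict \<Gamma> p) p A ep mp fp \<rbrakk>
     \<Longrightarrow> has_type (remove \<Gamma> p) (TLam p t) (Arr A \<sigma>) (Suc b) (e + ep) (m + mp) (f + fp)"
| abs_p: "\<lbrakk> has_type \<Gamma> t \<tau> b e m f; tight \<tau>; tight_ctx (restrict \<Gamma> p) \<rbrakk>
     \<Longrightarrow> has_type (remove \<Gamma> p) (TLam p t) TyM b e m (Suc f)"
| many_empty: "has_mtype ctx_empty t {#} 0 0 0 0"
| many_add: "\<lbrakk> has_type \<Gamma> t \<sigma> b e m f; has_mtype \<Delta> t A b' e' m' f' \<rbrakk>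
     \<Longrightarrow> has_mtype (ctx_union \<Gamma> \<Delta>) t (add_mset \<sigma> A) (b + b') (e + e') (m + m') (f + f')"
| app: "\<lbrakk> has_type \<Gamma> t (Arr A \<sigma>) bt et mt ft; has_mtype \<Delta> u A bu eu mu fu \<rbrakk>
     \<Longrightarrow> has_type (ctx_union \<Gamma> \<Delta>) (TApp t u) \<sigma> (bt + bu) (et + eu) (mt + mu) (ft + fu)"
| app_p: "has_type \<Gamma> t TyN b e m f \<Longrightarrow> has_type \<Gamma> (TApp t u) TyN b e m (Suc f)"
| pair: "\<lbrakk> has_mtype \<Gamma> t A bt et mt ft; has_mtype \<Delta> u B bu eu mu fu \<rbrakk>
     \<Longrightarrow> has_type (ctx_union \<Gamma> \<Delta>) (TPair t u) (Prod A B) (bt + bu) (et + eu) (mt + mu) (ft + fu)"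
| pair_p: "has_type ctx_empty (TPair t u) TyM 0 0 0 1"
| match: "\<lbrakk> has_type \<Gamma> t \<sigma> bt et mt ft; ptyp (restrict \<Gamma> p) p A ep mp fp;
            has_mtype \<Delta> u A bu eu mu fu \<rbrakk>
     \<Longrightarrow> has_type (ctx_union (remove \<Gamma> p) \<Delta>) (TSub t p u) \<sigma>
           (bt + bu) (et + eu + ep) (mt + mu + mp) (ft + fu + fp)"

end

theory Submission
  imports Defs
begin

inductive_cases TLamE: "has_type \<Gamma> (TLam p t) \<sigma> b e m f"
inductive_cases TAppE: "has_type \<Gamma> (TApp t u) \<sigma> b e m f"
inductive_cases TPairE: "has_type \<Gamma> (TPair t u) \<sigma> b e m f"
inductive_cases TSubE: "has_type \<Gamma> (TSub t p u) \<sigma> b e m f"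
inductive_cases TVarE: "has_type \<Gamma> (TVar x) \<sigma> b e m f"
inductive_cases PVE: "ptyp \<Gamma> (PV x) A e m f"
inductive_cases PPE: "ptyp \<Gamma> (PP p q) A e m f"
inductive_cases MEmptyE: "has_mtype \<Gamma> t {#} b e m f"
inductive_cases MAddE: "has_mtype \<Gamma> t (add_mset \<sigma> A) b e m f"

lemma ctx_union_comm: "ctx_union \<Gamma> \<Delta> = ctx_union \<Delta> \<Gamma>"
  by (auto simp: ctx_union_def fun_eq_iff add.commute)
lemma ctx_union_assoc: "ctx_union (ctx_union \<Gamma> \<Delta>) \<Theta> = ctx_union \<Gamma> (ctx_union \<Delta> \<Theta>)"
  by (auto simp: ctx_union_def fun_eq_iff add.assoc)
lemma ctx_union_empty[simp]: "ctx_union \<Gamma> ctx_empty = \<Gamma>" "ctx_union ctx_empty \<Gamma> = \<Gamma>"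
  by (auto simp: ctx_union_def ctx_empty_def fun_eq_iff)

lemma ptyp_dom: "ptyp \<Gamma> p A e m f \<Longrightarrow> ctx_dom \<Gamma> \<subseteq> pvars p"
  by (induction rule: ptyp.induct) (auto simp: ctx_dom_def ctx_one_def ctx_union_def)

lemma typ_dom:
  "has_type \<Gamma> t \<sigma> b e m f \<Longrightarrow> ctx_dom \<Gamma> \<subseteq> fv t"
  "has_mtype \<Gamma> t A b e m f \<Longrightarrow> ctx_dom \<Gamma> \<subseteq> fv t"
  by (induction rule: has_type_has_mtype.inducts)
     (auto simp: ctx_dom_def ctx_one_def ctx_union_def remove_def ctx_empty_def)

lemma mtype_single: "has_mtype \<Delta> u {#\<tau>#} b e m f \<Longrightarrow> has_type \<Delta> u \<tau> b e m f"
  by (erule MAddE) (auto elim!: MEmptyE)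

lemma mtype_singleI: "has_type \<Delta> u \<tau> b e m f \<Longrightarrow> has_mtype \<Delta> u {#\<tau>#} b e m f"
  using many_add[OF _ many_empty, of \<Delta> u \<tau> b e m f] by simp

lemma mtype_union_aux:
  "has_type \<Gamma> u \<sigma> b e m f \<Longrightarrow> True"
  "has_mtype \<Gamma> u A b e m f \<Longrightarrow> (\<forall>\<Delta> B b' e' m' f'. has_mtype \<Delta> u B b' e' m' f' \<longrightarrow>
   has_mtype (ctx_union \<Gamma> \<Delta>) u (A + B) (b + b') (e + e') (m + m') (f + f'))"
proof (induction rule: has_type_has_mtype.inducts)
  case (many_add \<Gamma> t \<sigma> b e m f \<Delta> A b' e' m' f')
  show ?case
  proof (intro allI impI)
    fix \<Delta>' B b'' e'' m'' f''
    assume "has_mtype \<Delta>' t B b'' e'' m'' f''"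
    with many_add.IH(2) have "has_mtype (ctx_union \<Delta> \<Delta>') t (A + B) (b' + b'') (e' + e'') (m' + m'') (f' + f'')" by blast
    from has_type_has_mtype.many_add[OF many_add.hyps(1) this]
    show "has_mtype (ctx_union (ctx_union \<Gamma> \<Delta>) \<Delta>') t (add_mset \<sigma> A + B) (b + b' + b'') (e + e' + e'') (m + m' + m'') (f + f' + f'')"
      by (simp add: ctx_union_assoc add.assoc)
  qed
qed auto

lemma mtype_union:
  "has_mtype \<Gamma> u A b e m f \<Longrightarrow> has_mtype \<Delta> u B b' e' m' f' \<Longrightarrow>
   has_mtype (ctx_union \<Gamma> \<Delta>) u (A + B) (b + b') (e + e') (m + m') (f + f')"
  using mtype_union_aux(2) by blast

lemma mtype_split_aux:
  "has_type \<Delta> u \<sigma> b e m f \<Longrightarrow> True"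
  "has_mtype \<Delta> u M b e m f \<Longrightarrow> (\<forall>A B. M = A + B \<longrightarrow>
   (\<exists>\<Delta>1 \<Delta>2 b1 e1 m1 f1 b2 e2 m2 f2. has_mtype \<Delta>1 u A b1 e1 m1 f1 \<and> has_mtype \<Delta>2 u B b2 e2 m2 f2
     \<and> \<Delta> = ctx_union \<Delta>1 \<Delta>2 \<and> b = b1 + b2 \<and> e = e1 + e2 \<and> m = m1 + m2 \<and> f = f1 + f2))"
proof (induction rule: has_type_has_mtype.inducts)
  case (many_empty t)
  then show ?case by (auto intro!: has_type_has_mtype.many_empty exI[of _ ctx_empty])
next
  case (many_add \<Gamma>1 u x b1 e1 m1 f1 \<Delta>1 M b2 e2 m2 f2)
  show ?case
  proof (intro allI impI)
    fix A B assume AB: "add_mset x M = A + B"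
    show "\<exists>\<Delta>1' \<Delta>2 b1' e1' m1' f1' b2' e2' m2' f2'. has_mtype \<Delta>1' u A b1' e1' m1' f1' \<and> has_mtype \<Delta>2 u B b2' e2' m2' f2'
     \<and> ctx_union \<Gamma>1 \<Delta>1 = ctx_union \<Delta>1' \<Delta>2 \<and> b1 + b2 = b1' + b2' \<and> e1 + e2 = e1' + e2' \<and> m1 + m2 = m1' + m2' \<and> f1 + f2 = f1' + f2'"
    proof (cases "x \<in># A")
      case True
      then have "M = (A - {#x#}) + B" using AB
        by (metis add_mset_remove_trivial insert_DiffM union_mset_add_mset_left)
      with many_add.IH(2) obtain D1 D2 c1 d1 n1 g1 c2 d2 n2 g2 where
        h: "has_mtype D1 u (A - {#x#}) c1 d1 n1 g1" "has_mtype D2 u B c2 d2 n2 g2"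
          "\<Delta>1 = ctx_union D1 D2" "b2 = c1 + c2" "e2 = d1 + d2" "m2 = n1 + n2" "f2 = g1 + g2" by blast
      have hA: "has_mtype (ctx_union \<Gamma>1 D1) u A (b1 + c1) (e1 + d1) (m1 + n1) (f1 + g1)"
        using has_type_has_mtype.many_add[OF many_add.hyps(1) h(1)] True by simp
      show ?thesis
        apply (rule exI[of _ "ctx_union \<Gamma>1 D1"], rule exI[of _ D2], rule exI[of _ "b1+c1"], rule exI[of _ "e1+d1"],
            rule exI[of _ "m1+n1"], rule exI[of _ "f1+g1"], rule exI[of _ c2], rule exI[of _ d2], rule exI[of _ n2],
            rule exI[of _ g2])
        using h hA by (auto simp: ctx_union_assoc)
    next
      case False
      have "x \<in># A + B" by (simp flip: AB)
      then have xB: "x \<in># B" using False by simp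
      then have "M = A + (B - {#x#})" using AB
        by (metis add_mset_remove_trivial insert_DiffM union_mset_add_mset_right)
      with many_add.IH(2) obtain D1 D2 c1 d1 n1 g1 c2 d2 n2 g2 where
        h: "has_mtype D1 u A c1 d1 n1 g1" "has_mtype D2 u (B - {#x#}) c2 d2 n2 g2"
          "\<Delta>1 = ctx_union D1 D2" "b2 = c1 + c2" "e2 = d1 + d2" "m2 = n1 + n2" "f2 = g1 + g2" by blast
      have hB: "has_mtype (ctx_union \<Gamma>1 D2) u B (b1 + c2) (e1 + d2) (m1 + n2) (f1 + g2)"
        using has_type_has_mtype.many_add[OF many_add.hyps(1) h(2)] xB by simp
      have hC: "ctx_union \<Gamma>1 (ctx_union D1 D2) = ctx_union D1 (ctx_union \<Gamma>1 D2)"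
        by (metis ctx_union_assoc ctx_union_comm)
      show ?thesis
        apply (rule exI[of _ D1], rule exI[of _ "ctx_union \<Gamma>1 D2"], rule exI[of _ c1], rule exI[of _ d1],
            rule exI[of _ n1], rule exI[of _ g1], rule exI[of _ "b1+c2"], rule exI[of _ "e1+d2"], rule exI[of _ "m1+n2"],
            rule exI[of _ "f1+g2"])
        using h hB hC by auto
    qed
  qed
qed auto

lemma mtype_split:
  "has_mtype \<Delta> u (A + B) b e m f \<Longrightarrow>
   \<exists>\<Delta>1 \<Delta>2 b1 e1 m1 f1 b2 e2 m2 f2. has_mtype \<Delta>1 u A b1 e1 m1 f1 \<and> has_mtype \<Delta>2 u B b2 e2 m2 f2
     \<and> \<Delta> = ctx_union \<Delta>1 \<Delta>2 \<and> b = b1 + b2 \<and> e = e1 + e2 \<and> m = m1 + m2 \<and> f = f1 + f2"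
  using mtype_split_aux(2) by blast

lemma pvars_pperm: "pvars (pperm \<pi> p) = \<pi> ` pvars p" by (induction p) auto
lemma pperm_comp: "pperm \<sigma> (pperm \<pi> p) = pperm (\<sigma> \<circ> \<pi>) p" by (induction p) auto
lemma perm_comp: "perm \<sigma> (perm \<pi> t) = perm (\<sigma> \<circ> \<pi>) t" by (induction t) (simp_all add: pperm_comp comp_def)
lemma pperm_id: "pperm id p = p" "pperm (\<lambda>a. a) p = p" by (induction p) auto
lemma perm_id: "perm id t = t" by (induction t) (auto simp: pperm_id)

lemma bij_image_iff: "bij \<pi> \<Longrightarrow> (y \<in> \<pi> ` P) = (inv \<pi> y \<in> P)"
  by (metis bij_def inj_image_mem_iff surj_f_inv_f)

lemma one_perm: "bij \<pi> \<Longrightarrow> (\<lambda>y. ctx_one x A (inv \<pi> y)) = ctx_one (\<pi> x) A"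
  by (auto simp: ctx_one_def fun_eq_iff bij_inv_eq_iff) (metis bij_inv_eq_iff)+
lemma union_perm: "(\<lambda>y. ctx_union \<Gamma> \<Delta> (inv \<pi> y)) = ctx_union (\<lambda>y. \<Gamma> (inv \<pi> y)) (\<lambda>y. \<Delta> (inv \<pi> y))"
  by (simp add: ctx_union_def)
lemma empty_perm: "(\<lambda>y. ctx_empty (inv \<pi> y)) = ctx_empty"
  by (simp add: ctx_empty_def)
lemma restrict_perm: "bij \<pi> \<Longrightarrow> restrict (\<lambda>y. \<Gamma> (inv \<pi> y)) (pperm \<pi> p) = (\<lambda>y. restrict \<Gamma> p (inv \<pi> y))"
  by (auto simp: restrict_def fun_eq_iff pvars_pperm bij_image_iff)
lemma remove_perm: "bij \<pi> \<Longrightarrow> remove (\<lambda>y. \<Gamma> (inv \<pi> y)) (pperm \<pi> p) = (\<lambda>y. remove \<Gamma> p (inv \<pi> y))"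
  by (auto simp: remove_def fun_eq_iff pvars_pperm bij_image_iff)
lemma tight_perm: "tight_ctx \<Gamma> \<Longrightarrow> tight_ctx (\<lambda>y. \<Gamma> (g y))"
  by (auto simp: tight_ctx_def)

lemma ptyp_perm: "ptyp \<Gamma> p A e m f \<Longrightarrow> bij \<pi> \<Longrightarrow> ptyp (\<lambda>y. \<Gamma> (inv \<pi> y)) (pperm \<pi> p) A e m f"
proof (induction rule: ptyp.induct)
  case (pat_v x A)
  have "ptyp (ctx_one (\<pi> x) A) (PV (\<pi> x)) A 1 0 0" by (rule ptyp.pat_v)
  then show ?case using one_perm[OF pat_v] by simp
next
  case (pat_prod \<Gamma> p A ep mp fp \<Delta> q B eq mq fq)
  have "pvars (pperm \<pi> p) \<inter> pvars (pperm \<pi> q) = {}"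
    using pat_prod by (simp add: pvars_pperm bij_is_inj image_Int[symmetric])
  from ptyp.pat_prod[OF pat_prod.IH(1)[OF pat_prod.prems] pat_prod.IH(2)[OF pat_prod.prems] this]
  show ?case by (simp add: union_perm)
next
  case (pat_p \<Gamma> p q)
  have "ctx_dom (\<lambda>y. \<Gamma> (inv \<pi> y)) \<subseteq> pvars (pperm \<pi> (PP p q))"
  proof
    fix y assume "y \<in> ctx_dom (\<lambda>y. \<Gamma> (inv \<pi> y))"
    then have "inv \<pi> y \<in> pvars (PP p q)" using pat_p.hyps(1) by (auto simp: ctx_dom_def)
    then show "y \<in> pvars (pperm \<pi> (PP p q))"
      unfolding pvars_pperm using bij_image_iff[OF pat_p.prems] by blast
  qed
  moreover have "tight_ctx (\<lambda>y. \<Gamma> (inv \<pi> y))" using pat_p.hyps(2) by (rule tight_perm)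
  ultimately show ?case by (simp only: pperm.simps ptyp.pat_p)
qed

lemma typ_perm:
  "has_type \<Gamma> t \<sigma> b e m f \<Longrightarrow> bij \<pi> \<Longrightarrow> has_type (\<lambda>y. \<Gamma> (inv \<pi> y)) (perm \<pi> t) \<sigma> b e m f"
  "has_mtype \<Gamma> t A b e m f \<Longrightarrow> bij \<pi> \<Longrightarrow> has_mtype (\<lambda>y. \<Gamma> (inv \<pi> y)) (perm \<pi> t) A b e m f"
proof (induction rule: has_type_has_mtype.inducts)
  case (ax x \<sigma>)
  have "has_type (ctx_one (\<pi> x) {#\<sigma>#}) (TVar (\<pi> x)) \<sigma> 0 0 0 0" by (rule has_type_has_mtype.ax)
  then show ?case using one_perm[OF ax] by simp
next
  case (abs \<Gamma> t \<sigma> b e m f p A ep mp fp)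
  have "ptyp (restrict (\<lambda>y. \<Gamma> (inv \<pi> y)) (pperm \<pi> p)) (pperm \<pi> p) A ep mp fp"
    using ptyp_perm[OF abs(2) abs(4)] by (simp only: restrict_perm abs(4))
  from has_type_has_mtype.abs[OF abs(3)[OF abs(4)] this] show ?case
    by (simp only: remove_perm abs(4) perm.simps)
next
  case (abs_p \<Gamma> t \<tau> b e m f p)
  have "tight_ctx (restrict (\<lambda>y. \<Gamma> (inv \<pi> y)) (pperm \<pi> p))"
    using tight_perm[OF abs_p(3)] by (simp only: restrict_perm abs_p(5))
  from has_type_has_mtype.abs_p[OF abs_p(4)[OF abs_p(5)] abs_p(2) this] show ?case
    by (simp only: remove_perm abs_p(5) perm.simps)
next
  case (many_empty t)
  show ?case unfolding empty_perm by (rule has_type_has_mtype.many_empty)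
next
  case (many_add \<Gamma> t \<sigma> b e m f \<Delta> A b' e' m' f')
  from has_type_has_mtype.many_add[OF many_add.IH(1)[OF many_add.prems] many_add.IH(2)[OF many_add.prems]]
  show ?case by (simp only: union_perm)
next
  case (app \<Gamma> t A \<sigma> bt et mt ft \<Delta> u bu eu mu fu)
  from has_type_has_mtype.app[OF app.IH(1)[OF app.prems] app.IH(2)[OF app.prems]]
  show ?case by (simp only: union_perm perm.simps)
next
  case (app_p \<Gamma> t b e m f u)
  from has_type_has_mtype.app_p[OF app_p.IH[OF app_p.prems]]
  show ?case by (simp only: perm.simps)
next
  case (pair \<Gamma> t A bt et mt ft \<Delta> u B bu eu mu fu)
  from has_type_has_mtype.pair[OF pair.IH(1)[OF pair.prems] pair.IH(2)[OF pair.prems]]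
  show ?case by (simp only: union_perm perm.simps)
next
  case (pair_p t u)
  show ?case unfolding empty_perm perm.simps by (rule has_type_has_mtype.pair_p)
next
  case (match \<Gamma> t \<sigma> bt et mt ft p A ep mp fp \<Delta> u bu eu mu fu)
  have "ptyp (restrict (\<lambda>y. \<Gamma> (inv \<pi> y)) (pperm \<pi> p)) (pperm \<pi> p) A ep mp fp"
    using ptyp_perm[OF \<open>ptyp (restrict \<Gamma> p) p A ep mp fp\<close> match.prems] by (simp only: restrict_perm match.prems)
  from has_type_has_mtype.match[OF match.IH(1)[OF match.prems] this match.IH(2)[OF match.prems]] show ?case
    by (simp only: remove_perm union_perm match.prems perm.simps)
qed

lemma unperm_ctx: "bij \<pi> \<Longrightarrow> (\<lambda>z. G (inv \<pi> (inv (inv \<pi>) z))) = G"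
  by (simp add: inv_inv_eq bij_is_inj)

lemma ptyp_unperm: "bij \<pi> \<Longrightarrow> ptyp (\<lambda>y. G (inv \<pi> y)) (pperm \<pi> p) A e m f \<Longrightarrow> ptyp G p A e m f"
  using ptyp_perm[of "\<lambda>y. G (inv \<pi> y)" "pperm \<pi> p" A e m f "inv \<pi>"]
  by (simp add: bij_imp_bij_inv unperm_ctx pperm_comp bij_is_inj pperm_id)

lemma typ_unperm: "bij \<pi> \<Longrightarrow> has_type (\<lambda>y. G (inv \<pi> y)) (perm \<pi> t) \<sigma> b e m f \<Longrightarrow> has_type G t \<sigma> b e m f"
  using typ_perm(1)[of "\<lambda>y. G (inv \<pi> y)" "perm \<pi> t" \<sigma> b e m f "inv \<pi>"]
  by (simp add: bij_imp_bij_inv unperm_ctx perm_comp bij_is_inj perm_id)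

lemma remove_fix:
  assumes "bij \<pi>" "\<forall>x\<in>fv t - pvars p. \<pi> x = x" "ctx_dom \<Gamma> \<subseteq> fv t"
  shows "remove (\<lambda>y. \<Gamma> (inv \<pi> y)) (pperm \<pi> p) = remove \<Gamma> p"
proof (rule ext)
  fix y
  have inj: "inj \<pi>" using assms(1) bij_is_inj by blast
  have r: "\<pi> (inv \<pi> z) = z" for z using assms(1) by (simp add: bij_is_surj surj_f_inv_f)
  have l: "inv \<pi> (\<pi> z) = z" for z using inj by simp
  have dom: "\<Gamma> z \<noteq> {#} \<Longrightarrow> z \<in> fv t" for z using assms(3) by (auto simp: ctx_dom_def)
  show "remove (\<lambda>y. \<Gamma> (inv \<pi> y)) (pperm \<pi> p) y = remove \<Gamma> p y"
    unfolding remove_def pvars_pperm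
  proof (cases "y \<in> \<pi> ` pvars p"; cases "y \<in> pvars p")
    assume a: "y \<in> \<pi> ` pvars p" "y \<notin> pvars p"
    then obtain z where z: "z \<in> pvars p" "y = \<pi> z" by blast
    have "\<Gamma> y = {#}"
    proof (rule ccontr)
      assume "\<Gamma> y \<noteq> {#}" then have "y \<in> fv t" using dom by blast
      then have "\<pi> y = y" using assms(2) a by blast
      then have "z = y" using z inj by (metis injD)
      then show False using a z by simp
    qed
    then show "(if y \<in> \<pi> ` pvars p then {#} else \<Gamma> (inv \<pi> y)) = (if y \<in> pvars p then {#} else \<Gamma> y)"
      using a by simp
  next
    assume a: "y \<notin> \<pi> ` pvars p" "y \<in> pvars p"
    have "\<Gamma> (inv \<pi> y) = {#}"
    proof (rule ccontr)
      assume "\<Gamma> (inv \<pi> y) \<noteq> {#}" then have "inv \<pi> y \<in> fv t" using dom by blast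
      moreover have "inv \<pi> y \<notin> pvars p" using a r by (metis image_eqI)
      ultimately have "\<pi> (inv \<pi> y) = inv \<pi> y" using assms(2) by blast
      then have "inv \<pi> y = y" using r by simp
      then show False using a r by (metis image_eqI)
    qed
    then show "(if y \<in> \<pi> ` pvars p then {#} else \<Gamma> (inv \<pi> y)) = (if y \<in> pvars p then {#} else \<Gamma> y)"
      using a by simp
  next
    assume a: "y \<notin> \<pi> ` pvars p" "y \<notin> pvars p"
    have "\<Gamma> (inv \<pi> y) = \<Gamma> y"
    proof (cases "inv \<pi> y \<in> fv t")
      case True
      moreover have "inv \<pi> y \<notin> pvars p" using a r by (metis image_eqI)
      ultimately have "\<pi> (inv \<pi> y) = inv \<pi> y" using assms(2) by blast
      then show ?thesis using r by simp
    next
      case False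
      then have "\<Gamma> (inv \<pi> y) = {#}" using dom by blast
      moreover have "\<Gamma> y = {#}"
      proof (rule ccontr)
        assume "\<Gamma> y \<noteq> {#}" then have "y \<in> fv t" using dom by blast
        then have "\<pi> y = y" using assms(2) a by blast
        then have "inv \<pi> y = y" using l by metis
        then show False using False \<open>y \<in> fv t\<close> by simp
      qed
      ultimately show ?thesis by simp
    qed
    then show "(if y \<in> \<pi> ` pvars p then {#} else \<Gamma> (inv \<pi> y)) = (if y \<in> pvars p then {#} else \<Gamma> y)"
      using a by simp
  qed simp
qed

lemma mtype_lift:
  "has_type \<Gamma> t \<sigma> b e m f \<Longrightarrow> True"
  "has_mtype \<Gamma> t A b e m f \<Longrightarrow> (\<forall>\<Gamma> \<sigma> b e m f. has_type \<Gamma> t \<sigma> b e m f \<longrightarrow> has_type \<Gamma> t' \<sigma> b e m f)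
     \<Longrightarrow> has_mtype \<Gamma> t' A b e m f"
  by (induction rule: has_type_has_mtype.inducts) (simp_all add: has_type_has_mtype.many_empty has_type_has_mtype.many_add)

lemma tight_perm_iff: assumes that: "bij \<pi>" shows "tight_ctx (\<lambda>y. R (inv \<pi> y)) = tight_ctx R"
proof
  assume a: "tight_ctx (\<lambda>y. R (inv \<pi> y))"
  have e: "(\<lambda>z. R (inv \<pi> (\<pi> z))) = R" by (simp add: inv_f_f[OF bij_is_inj[OF that]])
  show "tight_ctx R" using tight_perm[OF a, of \<pi>] unfolding e .
qed (rule tight_perm)

lemma bind_core:
  assumes "bij \<pi>" "\<forall>x\<in>fv t - pvars p. \<pi> x = x" "pperm \<pi> p = p'" "has_type Gt t \<tau> b e m f"
  shows "has_type (\<lambda>y. Gt (inv \<pi> y)) (perm \<pi> t) \<tau> b e m f"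
    and "remove (\<lambda>y. Gt (inv \<pi> y)) p' = remove Gt p"
    and "ptyp (restrict (\<lambda>y. Gt (inv \<pi> y)) p') p' A ep mp fp = ptyp (restrict Gt p) p A ep mp fp"
    and "tight_ctx (restrict (\<lambda>y. Gt (inv \<pi> y)) p') = tight_ctx (restrict Gt p)"
proof -
  show "has_type (\<lambda>y. Gt (inv \<pi> y)) (perm \<pi> t) \<tau> b e m f" using typ_perm(1)[OF assms(4,1)] .
  show "remove (\<lambda>y. Gt (inv \<pi> y)) p' = remove Gt p"
    using remove_fix[OF assms(1,2) typ_dom(1)[OF assms(4)]] assms(3) by simp
  have r: "restrict (\<lambda>y. Gt (inv \<pi> y)) p' = (\<lambda>y. restrict Gt p (inv \<pi> y))"
    using restrict_perm[OF assms(1)] assms(3) by blast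
  show "ptyp (restrict (\<lambda>y. Gt (inv \<pi> y)) p') p' A ep mp fp = ptyp (restrict Gt p) p A ep mp fp"
    unfolding r using ptyp_perm[OF _ assms(1)] ptyp_unperm[OF assms(1)] assms(3) by blast
  show "tight_ctx (restrict (\<lambda>y. Gt (inv \<pi> y)) p') = tight_ctx (restrict Gt p)"
    unfolding r using tight_perm_iff[OF assms(1)] .
qed

lemma unperm_obtain:
  assumes "bij \<pi>" "has_type G' (perm \<pi> t) \<tau> b e m f"
  shows "\<exists>Gt. G' = (\<lambda>y. Gt (inv \<pi> y)) \<and> has_type Gt t \<tau> b e m f"
proof -
  have eq0: "(\<lambda>y. G' (\<pi> (inv \<pi> y))) = G'"
    using assms(1) by (simp add: bij_is_surj surj_f_inv_f)
  then have eq: "G' = (\<lambda>y. (\<lambda>z. G' (\<pi> z)) (inv \<pi> y))" by simp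
  have "has_type (\<lambda>z. G' (\<pi> z)) t \<tau> b e m f"
    using typ_unperm[OF assms(1), of "\<lambda>z. G' (\<pi> z)"] assms(2) unfolding eq0 by blast
  with eq have "G' = (\<lambda>y. (\<lambda>z. G' (\<pi> z)) (inv \<pi> y)) \<and> has_type (\<lambda>z. G' (\<pi> z)) t \<tau> b e m f" by blast
  from exI[of "\<lambda>Gt. G' = (\<lambda>y. Gt (inv \<pi> y)) \<and> has_type Gt t \<tau> b e m f", OF this] show ?thesis .
qed

lemma alpha_typ:
  "alpha t t' \<Longrightarrow> (\<forall>\<Gamma> \<sigma> b e m f. has_type \<Gamma> t \<sigma> b e m f \<longrightarrow> has_type \<Gamma> t' \<sigma> b e m f)
                \<and> (\<forall>\<Gamma> \<sigma> b e m f. has_type \<Gamma> t' \<sigma> b e m f \<longrightarrow> has_type \<Gamma> t \<sigma> b e m f)"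
proof (induction rule: alpha.induct)
  case (a_var x)
  then show ?case by simp
next
  case (a_lam \<pi> t p p' t')
  have fwd: "has_type \<Gamma> (TLam p' t') \<sigma> b e m f" if h: "has_type \<Gamma> (TLam p t) \<sigma> b e m f" for \<Gamma> \<sigma> b e m f
    using h
  proof (cases rule: TLamE[consumes 1])
    case (1 Gt \<tau> b0 e0 m0 f0 A ep mp fp)
    note c = bind_core[OF a_lam.hyps(1,2,3) 1(7)]
    have "has_type (\<lambda>y. Gt (inv \<pi> y)) t' \<tau> b0 e0 m0 f0" using c(1) a_lam.IH by blast
    from has_type_has_mtype.abs[OF this c(3)[THEN iffD2, OF 1(8)]] show ?thesis
      using 1 c(2) by simp
  next
    case (2 Gt \<tau> f0)
    note c = bind_core[OF a_lam.hyps(1,2,3) 2(4)]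
    have "has_type (\<lambda>y. Gt (inv \<pi> y)) t' \<tau> b e m f0" using c(1) a_lam.IH by blast
    from has_type_has_mtype.abs_p[OF this 2(5) c(4)[THEN iffD2, OF 2(6)]] show ?thesis
      using 2 c(2) by simp
  qed
  have bwd: "has_type \<Gamma> (TLam p t) \<sigma> b e m f" if h: "has_type \<Gamma> (TLam p' t') \<sigma> b e m f" for \<Gamma> \<sigma> b e m f
    using h
  proof (cases rule: TLamE[consumes 1])
    case (1 G' \<tau> b0 e0 m0 f0 A ep mp fp)
    have "has_type G' (perm \<pi> t) \<tau> b0 e0 m0 f0" using 1(7) a_lam.IH by blast
    then obtain Gt where G: "G' = (\<lambda>y. Gt (inv \<pi> y))" "has_type Gt t \<tau> b0 e0 m0 f0"
      using unperm_obtain[OF a_lam.hyps(1)] by blast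
    note c = bind_core[OF a_lam.hyps(1,2,3) G(2)]
    from has_type_has_mtype.abs[OF G(2) c(3)[THEN iffD1, OF 1(8)[unfolded G(1)]]] show ?thesis
      using 1 c(2) G(1) by simp
  next
    case (2 G' \<tau> f0)
    have "has_type G' (perm \<pi> t) \<tau> b e m f0" using 2(4) a_lam.IH by blast
    then obtain Gt where G: "G' = (\<lambda>y. Gt (inv \<pi> y))" "has_type Gt t \<tau> b e m f0"
      using unperm_obtain[OF a_lam.hyps(1)] by blast
    note c = bind_core[OF a_lam.hyps(1,2,3) G(2)]
    from has_type_has_mtype.abs_p[OF G(2) 2(5) c(4)[THEN iffD1, OF 2(6)[unfolded G(1)]]] show ?thesis
      using 2 c(2) G(1) by simp
  qed
  show ?case using fwd bwd by blast
next
  case (a_app t t' u u')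
  have mf: "has_mtype \<Delta> u' A b e m f" if "has_mtype \<Delta> u A b e m f" for \<Delta> A b e m f
    using mtype_lift(2)[OF that] a_app.IH(2) by blast
  have mb: "has_mtype \<Delta> u A b e m f" if "has_mtype \<Delta> u' A b e m f" for \<Delta> A b e m f
    using mtype_lift(2)[OF that] a_app.IH(2) by blast
  have f1: "has_type \<Gamma> t' \<sigma> b e m f" if "has_type \<Gamma> t \<sigma> b e m f" for \<Gamma> \<sigma> b e m f
    using a_app.IH(1) that by blast
  have b1: "has_type \<Gamma> t \<sigma> b e m f" if "has_type \<Gamma> t' \<sigma> b e m f" for \<Gamma> \<sigma> b e m f
    using a_app.IH(1) that by blast
  have fwd: "has_type \<Gamma> (TApp t' u') \<sigma> b e m f" if h: "has_type \<Gamma> (TApp t u) \<sigma> b e m f" for \<Gamma> \<sigma> b e m f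
    using h
  proof (cases rule: TAppE[consumes 1])
    case (1 G A bt et mt ft D bu eu mu fu)
    from has_type_has_mtype.app[OF f1[OF 1(6)] mf[OF 1(7)]] show ?thesis using 1 by simp
  next
    case (2 f0)
    from has_type_has_mtype.app_p[OF f1[OF 2(3)]] show ?thesis using 2 by simp
  qed
  have bwd: "has_type \<Gamma> (TApp t u) \<sigma> b e m f" if h: "has_type \<Gamma> (TApp t' u') \<sigma> b e m f" for \<Gamma> \<sigma> b e m f
    using h
  proof (cases rule: TAppE[consumes 1])
    case (1 G A bt et mt ft D bu eu mu fu)
    from has_type_has_mtype.app[OF b1[OF 1(6)] mb[OF 1(7)]] show ?thesis using 1 by simp
  next
    case (2 f0)
    from has_type_has_mtype.app_p[OF b1[OF 2(3)]] show ?thesis using 2 by simp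
  qed
  show ?case using fwd bwd by blast
next
  case (a_pair t t' u u')
  have mf: "has_mtype \<Delta> t' A b e m f" if "has_mtype \<Delta> t A b e m f" for \<Delta> A b e m f
    using mtype_lift(2)[OF that] a_pair.IH(1) by blast
  have mb: "has_mtype \<Delta> t A b e m f" if "has_mtype \<Delta> t' A b e m f" for \<Delta> A b e m f
    using mtype_lift(2)[OF that] a_pair.IH(1) by blast
  have mf2: "has_mtype \<Delta> u' A b e m f" if "has_mtype \<Delta> u A b e m f" for \<Delta> A b e m f
    using mtype_lift(2)[OF that] a_pair.IH(2) by blast
  have mb2: "has_mtype \<Delta> u A b e m f" if "has_mtype \<Delta> u' A b e m f" for \<Delta> A b e m f
    using mtype_lift(2)[OF that] a_pair.IH(2) by blast
  have fwd: "has_type \<Gamma> (TPair t' u') \<sigma> b e m f" if h: "has_type \<Gamma> (TPair t u) \<sigma> b e m f" for \<Gamma> \<sigma> b e m f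
    using h
  proof (cases rule: TPairE[consumes 1])
    case (1 G A bt et mt ft D B bu eu mu fu)
    from has_type_has_mtype.pair[OF mf[OF 1(7)] mf2[OF 1(8)]] show ?thesis using 1 by simp
  next
    case 2
    then show ?thesis using has_type_has_mtype.pair_p by simp
  qed
  have bwd: "has_type \<Gamma> (TPair t u) \<sigma> b e m f" if h: "has_type \<Gamma> (TPair t' u') \<sigma> b e m f" for \<Gamma> \<sigma> b e m f
    using h
  proof (cases rule: TPairE[consumes 1])
    case (1 G A bt et mt ft D B bu eu mu fu)
    from has_type_has_mtype.pair[OF mb[OF 1(7)] mb2[OF 1(8)]] show ?thesis using 1 by simp
  next
    case 2
    then show ?thesis using has_type_has_mtype.pair_p by simp
  qed
  show ?case using fwd bwd by blast
next
  case (a_sub \<pi> t p p' t' u u')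
  have mf: "has_mtype \<Delta> u' A b e m f" if "has_mtype \<Delta> u A b e m f" for \<Delta> A b e m f
    using mtype_lift(2)[OF that] a_sub.IH(2) by blast
  have mb: "has_mtype \<Delta> u A b e m f" if "has_mtype \<Delta> u' A b e m f" for \<Delta> A b e m f
    using mtype_lift(2)[OF that] a_sub.IH(2) by blast
  have fwd: "has_type \<Gamma> (TSub t' p' u') \<sigma> b e m f" if h: "has_type \<Gamma> (TSub t p u) \<sigma> b e m f" for \<Gamma> \<sigma> b e m f
    using h
  proof (cases rule: TSubE[consumes 1])
    case (1 Gt bt et mt ft A ep mp fp \<Delta> bu eu mu fu)
    note c = bind_core[OF a_sub.hyps(1,2,3) 1(6)]
    have "has_type (\<lambda>y. Gt (inv \<pi> y)) t' \<sigma> bt et mt ft" using c(1) a_sub.IH(1) by blast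
    from has_type_has_mtype.match[OF this c(3)[THEN iffD2, OF 1(7)] mf[OF 1(8)]] show ?thesis
      using 1 c(2) by simp
  qed
  have bwd: "has_type \<Gamma> (TSub t p u) \<sigma> b e m f" if h: "has_type \<Gamma> (TSub t' p' u') \<sigma> b e m f" for \<Gamma> \<sigma> b e m f
    using h
  proof (cases rule: TSubE[consumes 1])
    case (1 G' bt et mt ft A ep mp fp \<Delta> bu eu mu fu)
    have "has_type G' (perm \<pi> t) \<sigma> bt et mt ft" using 1(6) a_sub.IH(1) by blast
    then obtain Gt where G: "G' = (\<lambda>y. Gt (inv \<pi> y))" "has_type Gt t \<sigma> bt et mt ft"
      using unperm_obtain[OF a_sub.hyps(1)] by blast
    note c = bind_core[OF a_sub.hyps(1,2,3) G(2)]
    have "ptyp (restrict Gt p) p A ep mp fp" using c(3) 1(7) G(1) by simp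
    from has_type_has_mtype.match[OF G(2) this mb[OF 1(8)]] show ?thesis
      using 1 c(2) G(1) by simp
  qed
  show ?case using fwd bwd by blast
qed

lemma alpha_fwd: "alpha t t' \<Longrightarrow> has_type \<Gamma> t \<sigma> b e m f \<Longrightarrow> has_type \<Gamma> t' \<sigma> b e m f"
  using alpha_typ by blast
lemma alpha_bwd: "alpha t t' \<Longrightarrow> has_type \<Gamma> t' \<sigma> b e m f \<Longrightarrow> has_type \<Gamma> t \<sigma> b e m f"
  using alpha_typ by blast

lemma htype_cong: "has_type \<Gamma> t \<sigma> b e m f \<Longrightarrow> \<Gamma> = \<Gamma>' \<Longrightarrow> b = b' \<Longrightarrow> e = e' \<Longrightarrow> m = m' \<Longrightarrow> f = f'
   \<Longrightarrow> has_type \<Gamma>' t \<sigma> b' e' m' f'" by simp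
lemma mtype_cong: "has_mtype \<Gamma> t A b e m f \<Longrightarrow> \<Gamma> = \<Gamma>' \<Longrightarrow> b = b' \<Longrightarrow> e = e' \<Longrightarrow> m = m' \<Longrightarrow> f = f'
   \<Longrightarrow> has_mtype \<Gamma>' t A b' e' m' f'" by simp

lemma mdom: assumes "has_mtype \<Delta> u A b e m f" "y \<notin> fv u" shows "\<Delta> y = {#}"
  using typ_dom(2)[OF assms(1)] assms(2) by (auto simp: ctx_dom_def)
lemma tdom: assumes "has_type \<Delta> u A b e m f" "y \<notin> fv u" shows "\<Delta> y = {#}"
  using typ_dom(1)[OF assms(1)] assms(2) by (auto simp: ctx_dom_def)

lemma remove_union_disj: "(\<forall>y\<in>pvars p. \<Delta> y = {#}) \<Longrightarrow> remove (ctx_union G \<Delta>) p = ctx_union (remove G p) \<Delta>"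
  by (auto simp: remove_def ctx_union_def fun_eq_iff)
lemma restrict_union_disj: "(\<forall>y\<in>pvars p. \<Delta> y = {#}) \<Longrightarrow> restrict (ctx_union G \<Delta>) p = restrict G p"
  by (auto simp: restrict_def ctx_union_def fun_eq_iff)
lemma restrict_remove_x: "x \<notin> pvars p \<Longrightarrow> restrict (remove G (PV x)) p = restrict G p"
  by (auto simp: restrict_def remove_def fun_eq_iff)
lemma remove_at: "x \<notin> pvars p \<Longrightarrow> remove G p x = G x"
  by (simp add: remove_def)
lemma union_at: "ctx_union G H x = G x + H x" by (simp add: ctx_union_def)
lemma remove_empty[simp]: "remove ctx_empty p = ctx_empty"
  by (simp add: remove_def ctx_empty_def fun_eq_iff)

lemma subst_typ:
  "has_type \<Gamma> t \<sigma> b e m f \<Longrightarrow> \<forall>\<Delta> u bu eu mu fu. bv t \<inter> (fv u \<union> {x}) = {} \<longrightarrow> has_mtype \<Delta> u (\<Gamma> x) bu eu mu fu \<longrightarrow>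
     has_type (ctx_union (remove \<Gamma> (PV x)) \<Delta>) (nsubst t x u) \<sigma> (b + bu) (e + eu) (m + mu) (f + fu)"
  "has_mtype \<Gamma> t A b e m f \<Longrightarrow> \<forall>\<Delta> u bu eu mu fu. bv t \<inter> (fv u \<union> {x}) = {} \<longrightarrow> has_mtype \<Delta> u (\<Gamma> x) bu eu mu fu \<longrightarrow>
     has_mtype (ctx_union (remove \<Gamma> (PV x)) \<Delta>) (nsubst t x u) A (b + bu) (e + eu) (m + mu) (f + fu)"
proof (induction rule: has_type_has_mtype.inducts)
  case (ax y \<sigma>)
  show ?case
  proof (intro allI impI)
    fix \<Delta> u bu eu mu fu
    assume d: "has_mtype \<Delta> u (ctx_one y {#\<sigma>#} x) bu eu mu fu"
    show "has_type (ctx_union (remove (ctx_one y {#\<sigma>#}) (PV x)) \<Delta>) (nsubst (TVar y) x u) \<sigma> (0 + bu) (0 + eu) (0 + mu) (0 + fu)"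
    proof (cases "y = x")
      case True
      have "remove (ctx_one y {#\<sigma>#}) (PV x) = ctx_empty" using True
        by (simp add: remove_def ctx_one_def ctx_empty_def fun_eq_iff)
      then show ?thesis using True d mtype_single by (simp add: ctx_one_def)
    next
      case False
      have "remove (ctx_one y {#\<sigma>#}) (PV x) = ctx_one y {#\<sigma>#}" using False
        by (simp add: remove_def ctx_one_def fun_eq_iff)
      moreover from d False have "\<Delta> = ctx_empty \<and> bu = 0 \<and> eu = 0 \<and> mu = 0 \<and> fu = 0"
        by (auto simp: ctx_one_def elim: MEmptyE)
      ultimately show ?thesis using False by (simp add: has_type_has_mtype.ax)
    qed
  qed
next
  case (abs \<Gamma> t \<sigma> b e m f p A ep mp fp)
  show ?case
  proof (intro allI impI)
    fix \<Delta> u bu eu mu fu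
    assume bvd: "bv (TLam p t) \<inter> (fv u \<union> {x}) = {}" and d: "has_mtype \<Delta> u (remove \<Gamma> p x) bu eu mu fu"
    have xp: "x \<notin> pvars p" using bvd by auto
    have dp: "\<forall>y\<in>pvars p. \<Delta> y = {#}" using bvd mdom[OF d] by auto
    have ih: "has_type (ctx_union (remove \<Gamma> (PV x)) \<Delta>) (nsubst t x u) \<sigma> (b + bu) (e + eu) (m + mu) (f + fu)"
    proof -
      have b2: "bv t \<inter> (fv u \<union> {x}) = {}" using bvd by auto
      have d2: "has_mtype \<Delta> u (\<Gamma> x) bu eu mu fu" using d remove_at[OF xp] by simp
      show ?thesis using abs.IH[rule_format, OF b2 d2] .
    qed
    have pt: "ptyp (restrict (ctx_union (remove \<Gamma> (PV x)) \<Delta>) p) p A ep mp fp"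
      using abs.hyps(2) by (simp add: restrict_union_disj[OF dp] restrict_remove_x[OF xp])
    have ctx: "remove (ctx_union (remove \<Gamma> (PV x)) \<Delta>) p = ctx_union (remove (remove \<Gamma> p) (PV x)) \<Delta>"
      using dp by (auto simp: remove_def ctx_union_def fun_eq_iff)
    show "has_type (ctx_union (remove (remove \<Gamma> p) (PV x)) \<Delta>) (nsubst (TLam p t) x u) (Arr A \<sigma>) (Suc b + bu) (e + ep + eu) (m + mp + mu) (f + fp + fu)"
      by ((simp only: nsubst.simps)?, rule htype_cong[OF has_type_has_mtype.abs[OF ih pt]]) (simp_all add: ctx)
  qed
next
  case (abs_p \<Gamma> t \<tau> b e m f p)
  show ?case
  proof (intro allI impI)
    fix \<Delta> u bu eu mu fu
    assume bvd: "bv (TLam p t) \<inter> (fv u \<union> {x}) = {}" and d: "has_mtype \<Delta> u (remove \<Gamma> p x) bu eu mu fu"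
    have xp: "x \<notin> pvars p" using bvd by auto
    have dp: "\<forall>y\<in>pvars p. \<Delta> y = {#}" using bvd mdom[OF d] by auto
    have ih: "has_type (ctx_union (remove \<Gamma> (PV x)) \<Delta>) (nsubst t x u) \<tau> (b + bu) (e + eu) (m + mu) (f + fu)"
    proof -
      have b2: "bv t \<inter> (fv u \<union> {x}) = {}" using bvd by auto
      have d2: "has_mtype \<Delta> u (\<Gamma> x) bu eu mu fu" using d remove_at[OF xp] by simp
      show ?thesis using abs_p.IH[rule_format, OF b2 d2] .
    qed
    have pt: "tight_ctx (restrict (ctx_union (remove \<Gamma> (PV x)) \<Delta>) p)"
      using abs_p.hyps(3) by (simp add: restrict_union_disj[OF dp] restrict_remove_x[OF xp])
    have ctx: "remove (ctx_union (remove \<Gamma> (PV x)) \<Delta>) p = ctx_union (remove (remove \<Gamma> p) (PV x)) \<Delta>"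
      using dp by (auto simp: remove_def ctx_union_def fun_eq_iff)
    show "has_type (ctx_union (remove (remove \<Gamma> p) (PV x)) \<Delta>) (nsubst (TLam p t) x u) TyM (b + bu) (e + eu) (m + mu) (Suc f + fu)"
      by ((simp only: nsubst.simps)?, rule htype_cong[OF has_type_has_mtype.abs_p[OF ih abs_p.hyps(2) pt]]) (simp_all add: ctx)
  qed
next
  case (many_empty t)
  show ?case
  proof (intro allI impI)
    fix \<Delta> u bu eu mu fu
    assume "has_mtype \<Delta> u (ctx_empty x) bu eu mu fu"
    then have "\<Delta> = ctx_empty \<and> bu = 0 \<and> eu = 0 \<and> mu = 0 \<and> fu = 0"
      by (auto simp: ctx_empty_def elim: MEmptyE)
    then show "has_mtype (ctx_union (remove ctx_empty (PV x)) \<Delta>) (nsubst t x u) {#} (0 + bu) (0 + eu) (0 + mu) (0 + fu)"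
      by (simp add: has_type_has_mtype.many_empty)
  qed
next
  case (many_add \<Gamma> t \<sigma> b e m f \<Delta>' A b' e' m' f')
  show ?case
  proof (intro allI impI)
    fix \<Delta> u bu eu mu fu
    assume bvd: "bv t \<inter> (fv u \<union> {x}) = {}" and d: "has_mtype \<Delta> u (ctx_union \<Gamma> \<Delta>' x) bu eu mu fu"
    have d': "has_mtype \<Delta> u (\<Gamma> x + \<Delta>' x) bu eu mu fu" using d by (simp add: union_at )
    from mtype_split[OF d'] obtain D1 D2 b1 e1 m1 f1 b2 e2 m2 f2 where
      s: "has_mtype D1 u (\<Gamma> x) b1 e1 m1 f1" "has_mtype D2 u (\<Delta>' x) b2 e2 m2 f2" "\<Delta> = ctx_union D1 D2"
         "bu = b1 + b2" "eu = e1 + e2" "mu = m1 + m2" "fu = f1 + f2"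
      by blast
    have i1: "has_type (ctx_union (remove \<Gamma> (PV x)) D1) (nsubst t x u) \<sigma> (b + b1) (e + e1) (m + m1) (f + f1)"
      using many_add.IH(1)[rule_format, OF _ s(1)] bvd by auto
    have i2: "has_mtype (ctx_union (remove \<Delta>' (PV x)) D2) (nsubst t x u) A (b' + b2) (e' + e2) (m' + m2) (f' + f2)"
      using many_add.IH(2)[rule_format, OF _ s(2)] bvd by auto
    show "has_mtype (ctx_union (remove (ctx_union \<Gamma> \<Delta>') (PV x)) \<Delta>) (nsubst t x u) (add_mset \<sigma> A) (b + b' + bu) (e + e' + eu) (m + m' + mu) (f + f' + fu)"
      by ((simp only: nsubst.simps)?, rule mtype_cong[OF has_type_has_mtype.many_add[OF i1 i2]])
         (simp_all add: s ctx_union_def remove_def fun_eq_iff ac_simps)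
  qed
next
  case (app \<Gamma> t A \<sigma> bt et mt ft \<Delta>' u' bu' eu' mu' fu')
  show ?case
  proof (intro allI impI)
    fix \<Delta> u bu eu mu fu
    assume bvd: "bv (TApp t u') \<inter> (fv u \<union> {x}) = {}" and d: "has_mtype \<Delta> u (ctx_union \<Gamma> \<Delta>' x) bu eu mu fu"
    have d': "has_mtype \<Delta> u (\<Gamma> x + \<Delta>' x) bu eu mu fu" using d by (simp add: union_at )
    from mtype_split[OF d'] obtain D1 D2 b1 e1 m1 f1 b2 e2 m2 f2 where
      s: "has_mtype D1 u (\<Gamma> x) b1 e1 m1 f1" "has_mtype D2 u (\<Delta>' x) b2 e2 m2 f2" "\<Delta> = ctx_union D1 D2"
         "bu = b1 + b2" "eu = e1 + e2" "mu = m1 + m2" "fu = f1 + f2"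
      by blast
    have i1: "has_type (ctx_union (remove \<Gamma> (PV x)) D1) (nsubst t x u) (Arr A \<sigma>) (bt + b1) (et + e1) (mt + m1) (ft + f1)"
      using app.IH(1)[rule_format, OF _ s(1)] bvd by auto
    have i2: "has_mtype (ctx_union (remove \<Delta>' (PV x)) D2) (nsubst u' x u) A (bu' + b2) (eu' + e2) (mu' + m2) (fu' + f2)"
      using app.IH(2)[rule_format, OF _ s(2)] bvd by auto
    show "has_type (ctx_union (remove (ctx_union \<Gamma> \<Delta>') (PV x)) \<Delta>) (nsubst (TApp t u') x u) \<sigma> (bt + bu' + bu) (et + eu' + eu) (mt + mu' + mu) (ft + fu' + fu)"
      by ((simp only: nsubst.simps)?, rule htype_cong[OF has_type_has_mtype.app[OF i1 i2]])
         (simp_all add: s ctx_union_def remove_def fun_eq_iff ac_simps)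
  qed
next
  case (app_p \<Gamma> t b e m f u')
  show ?case
  proof (intro allI impI)
    fix \<Delta> u bu eu mu fu
    assume bvd: "bv (TApp t u') \<inter> (fv u \<union> {x}) = {}" and d: "has_mtype \<Delta> u (\<Gamma> x) bu eu mu fu"
    have i1: "has_type (ctx_union (remove \<Gamma> (PV x)) \<Delta>) (nsubst t x u) TyN (b + bu) (e + eu) (m + mu) (f + fu)"
      using app_p.IH[rule_format, OF _ d] bvd by auto
    show "has_type (ctx_union (remove \<Gamma> (PV x)) \<Delta>) (nsubst (TApp t u') x u) TyN (b + bu) (e + eu) (m + mu) (Suc f + fu)"
      using has_type_has_mtype.app_p[OF i1] by simp
  qed
next
  case (pair \<Gamma> t A bt et mt ft \<Delta>' u' B bu' eu' mu' fu')
  show ?case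
  proof (intro allI impI)
    fix \<Delta> u bu eu mu fu
    assume bvd: "bv (TPair t u') \<inter> (fv u \<union> {x}) = {}" and d: "has_mtype \<Delta> u (ctx_union \<Gamma> \<Delta>' x) bu eu mu fu"
    have d': "has_mtype \<Delta> u (\<Gamma> x + \<Delta>' x) bu eu mu fu" using d by (simp add: union_at )
    from mtype_split[OF d'] obtain D1 D2 b1 e1 m1 f1 b2 e2 m2 f2 where
      s: "has_mtype D1 u (\<Gamma> x) b1 e1 m1 f1" "has_mtype D2 u (\<Delta>' x) b2 e2 m2 f2" "\<Delta> = ctx_union D1 D2"
         "bu = b1 + b2" "eu = e1 + e2" "mu = m1 + m2" "fu = f1 + f2"
      by blast
    have i1: "has_mtype (ctx_union (remove \<Gamma> (PV x)) D1) (nsubst t x u) A (bt + b1) (et + e1) (mt + m1) (ft + f1)"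
      using pair.IH(1)[rule_format, OF _ s(1)] bvd by auto
    have i2: "has_mtype (ctx_union (remove \<Delta>' (PV x)) D2) (nsubst u' x u) B (bu' + b2) (eu' + e2) (mu' + m2) (fu' + f2)"
      using pair.IH(2)[rule_format, OF _ s(2)] bvd by auto
    show "has_type (ctx_union (remove (ctx_union \<Gamma> \<Delta>') (PV x)) \<Delta>) (nsubst (TPair t u') x u) (Prod A B) (bt + bu' + bu) (et + eu' + eu) (mt + mu' + mu) (ft + fu' + fu)"
      by ((simp only: nsubst.simps)?, rule htype_cong[OF has_type_has_mtype.pair[OF i1 i2]])
         (simp_all add: s ctx_union_def remove_def fun_eq_iff ac_simps)
  qed
next
  case (pair_p t u')
  show ?case
  proof (intro allI impI)
    fix \<Delta> u bu eu mu fu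
    assume "has_mtype \<Delta> u (ctx_empty x) bu eu mu fu"
    then have "\<Delta> = ctx_empty \<and> bu = 0 \<and> eu = 0 \<and> mu = 0 \<and> fu = 0"
      by (auto simp: ctx_empty_def elim: MEmptyE)
    then show "has_type (ctx_union (remove ctx_empty (PV x)) \<Delta>) (nsubst (TPair t u') x u) TyM (0 + bu) (0 + eu) (0 + mu) (1 + fu)"
      using has_type_has_mtype.pair_p[of "nsubst t x u" "nsubst u' x u"] by simp
  qed
next
  case (match \<Gamma> t \<sigma> bt et mt ft p A ep mp fp \<Delta>' u' bu' eu' mu' fu')
  show ?case
  proof (intro allI impI)
    fix \<Delta> u bu eu mu fu
    assume bvd: "bv (TSub t p u') \<inter> (fv u \<union> {x}) = {}" and d: "has_mtype \<Delta> u (ctx_union (remove \<Gamma> p) \<Delta>' x) bu eu mu fu"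
    have xp: "x \<notin> pvars p" using bvd by auto
    have d': "has_mtype \<Delta> u (\<Gamma> x + \<Delta>' x) bu eu mu fu" using d by (simp add: union_at remove_at[OF xp])
    from mtype_split[OF d'] obtain D1 D2 b1 e1 m1 f1 b2 e2 m2 f2 where
      s: "has_mtype D1 u (\<Gamma> x) b1 e1 m1 f1" "has_mtype D2 u (\<Delta>' x) b2 e2 m2 f2" "\<Delta> = ctx_union D1 D2"
         "bu = b1 + b2" "eu = e1 + e2" "mu = m1 + m2" "fu = f1 + f2"
      by blast
    have dp: "\<forall>y\<in>pvars p. D1 y = {#}" using bvd mdom[OF s(1)] by auto
    have i1: "has_type (ctx_union (remove \<Gamma> (PV x)) D1) (nsubst t x u) \<sigma> (bt + b1) (et + e1) (mt + m1) (ft + f1)"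
      using match.IH(1)[rule_format, OF _ s(1)] bvd by auto
    have i2: "has_mtype (ctx_union (remove \<Delta>' (PV x)) D2) (nsubst u' x u) A (bu' + b2) (eu' + e2) (mu' + m2) (fu' + f2)"
      using match.IH(2)[rule_format, OF _ s(2)] bvd by auto
    have pt: "ptyp (restrict (ctx_union (remove \<Gamma> (PV x)) D1) p) p A ep mp fp"
      using match.hyps(2) by (simp add: restrict_union_disj[OF dp] restrict_remove_x[OF xp])
    show "has_type (ctx_union (remove (ctx_union (remove \<Gamma> p) \<Delta>') (PV x)) \<Delta>) (nsubst (TSub t p u') x u) \<sigma> (bt + bu' + bu) (et + eu' + ep + eu) (mt + mu' + mp + mu) (ft + fu' + fp + fu)"
      apply ((simp only: nsubst.simps)?, rule htype_cong[OF has_type_has_mtype.match[OF i1 pt i2]])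
      using dp xp by (auto simp: s ctx_union_def remove_def fun_eq_iff ac_simps)
  qed
qed

lemma plug_Nil[simp]: "plug [] t = t" by (simp add: plug_def)
lemma plug_snoc[simp]: "plug (L @ [(q, v)]) t = TSub (plug L t) q v" by (simp add: plug_def)
lemma bvL_Nil[simp]: "bvL [] = {}" by (simp add: bvL_def)
lemma bvL_snoc[simp]: "bvL (L @ [(q, v)]) = bvL L \<union> pvars q" by (auto simp: bvL_def)

lemma plug_inv:
  "has_type \<Gamma> (plug L t) \<sigma> b e m f \<Longrightarrow>
   \<exists>\<Gamma>0 b0 e0 m0 f0 bL eL mL fL. has_type \<Gamma>0 t \<sigma> b0 e0 m0 f0 \<and> b = b0 + bL \<and> e = e0 + eL \<and> m = m0 + mL \<and> f = f0 + fL
     \<and> (\<forall>\<Theta> t' \<tau> b' e' m' f'. has_type (ctx_union \<Gamma>0 \<Theta>) t' \<tau> b' e' m' f' \<longrightarrow> ctx_dom \<Theta> \<inter> bvL L = {} \<longrightarrow>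
          has_type (ctx_union \<Gamma> \<Theta>) (plug L t') \<tau> (b' + bL) (e' + eL) (m' + mL) (f' + fL))"
proof (induction L arbitrary: \<Gamma> b e m f rule: rev_induct)
  case Nil
  then show ?case by (intro exI[of _ \<Gamma>] exI[of _ b] exI[of _ e] exI[of _ m] exI[of _ f] exI[of _ 0]) simp
next
  case (snoc qv L)
  obtain q v where qv: "qv = (q, v)" by fastforce
  from snoc.prems[unfolded qv plug_snoc] show ?case
  proof (cases rule: TSubE[consumes 1])
    case (1 Ga ba ea ma fa B eq mq fq Dv bv' ev mv fv')
    from snoc.IH[OF 1(6)] obtain \<Gamma>0 b0 e0 m0 f0 bL eL mL fL where
      ih: "has_type \<Gamma>0 t \<sigma> b0 e0 m0 f0" "ba = b0 + bL" "ea = e0 + eL" "ma = m0 + mL" "fa = f0 + fL"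
      "\<forall>\<Theta> t' \<tau> b' e' m' f'. has_type (ctx_union \<Gamma>0 \<Theta>) t' \<tau> b' e' m' f' \<longrightarrow> ctx_dom \<Theta> \<inter> bvL L = {} \<longrightarrow>
          has_type (ctx_union Ga \<Theta>) (plug L t') \<tau> (b' + bL) (e' + eL) (m' + mL) (f' + fL)" by blast
    have re: "has_type (ctx_union \<Gamma> \<Theta>) (plug (L @ [qv]) t') \<tau> (b' + (bL + bv')) (e' + (eL + ev + eq)) (m' + (mL + mv + mq)) (f' + (fL + fv' + fq))"
      if h: "has_type (ctx_union \<Gamma>0 \<Theta>) t' \<tau> b' e' m' f'" "ctx_dom \<Theta> \<inter> bvL (L @ [qv]) = {}" for \<Theta> t' \<tau> b' e' m' f'
    proof -
      have d1: "ctx_dom \<Theta> \<inter> bvL L = {}" and d2: "\<forall>y\<in>pvars q. \<Theta> y = {#}"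
        using h(2) by (auto simp: qv ctx_dom_def)
      have a: "has_type (ctx_union Ga \<Theta>) (plug L t') \<tau> (b' + bL) (e' + eL) (m' + mL) (f' + fL)"
        using ih(6) h(1) d1 by blast
      have p: "ptyp (restrict (ctx_union Ga \<Theta>) q) q B eq mq fq"
        using 1(7) by (simp add: restrict_union_disj[OF d2])
      from has_type_has_mtype.match[OF a p 1(8)] show ?thesis
        apply (simp only: qv plug_snoc)
        apply (erule htype_cong)
        using d2 by (auto simp: 1(1) ctx_union_def remove_def fun_eq_iff ac_simps)
    qed
    show ?thesis
      apply (rule exI[of _ \<Gamma>0], rule exI[of _ b0], rule exI[of _ e0], rule exI[of _ m0], rule exI[of _ f0])
      apply (rule exI[of _ "bL + bv'"], rule exI[of _ "eL + ev + eq"], rule exI[of _ "mL + mv + mq"], rule exI[of _ "fL + fv' + fq"])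
      using ih(1-5) 1(2-5) re by (auto simp: ac_simps)
  qed
qed

lemma step_b:
  assumes "has_type \<Gamma> (TApp (plug L (TLam p s)) u') \<sigma> b e m f" "bvL L \<inter> fv u' = {}"
  shows "\<exists>b'. has_type \<Gamma> (plug L (TSub s p u')) \<sigma> b' e m f \<and> b = Suc b'"
  using assms(1)
proof (cases rule: TAppE[consumes 1])
  case (1 G A bt et mt ft D bu eu mu fu)
  from plug_inv[OF 1(6)] obtain \<Gamma>0 b0 e0 m0 f0 bL eL mL fL where
    pi: "has_type \<Gamma>0 (TLam p s) (Arr A \<sigma>) b0 e0 m0 f0" "bt = b0 + bL" "et = e0 + eL" "mt = m0 + mL" "ft = f0 + fL"
      "\<forall>\<Theta> t' \<tau> b' e' m' f'. has_type (ctx_union \<Gamma>0 \<Theta>) t' \<tau> b' e' m' f' \<longrightarrow> ctx_dom \<Theta> \<inter> bvL L = {} \<longrightarrow>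
          has_type (ctx_union G \<Theta>) (plug L t') \<tau> (b' + bL) (e' + eL) (m' + mL) (f' + fL)" by blast
  from pi(1) show ?thesis
  proof (cases rule: TLamE[consumes 1])
    case (1 Gs \<sigma>' bs es ms fs A' ep mp fp)
    have AA: "A' = A" "\<sigma>' = \<sigma>" using 1(2) by auto
    have hm: "has_type (ctx_union (remove Gs p) D) (TSub s p u') \<sigma> (bs + bu) (es + eu + ep) (ms + mu + mp) (fs + fu + fp)"
      using has_type_has_mtype.match[OF 1(7)[unfolded AA] 1(8)[unfolded AA] \<open>has_mtype D u' A bu eu mu fu\<close>] .
    have dd: "ctx_dom D \<inter> bvL L = {}" using typ_dom(2)[OF \<open>has_mtype D u' A bu eu mu fu\<close>] assms(2) by blast
    have "has_type (ctx_union G D) (plug L (TSub s p u')) \<sigma> (bs + bu + bL) (es + eu + ep + eL) (ms + mu + mp + mL) (fs + fu + fp + fL)"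
      using pi(6) hm dd unfolding 1(1)[symmetric] by blast
    then show ?thesis
      using \<open>\<Gamma> = ctx_union G D\<close> \<open>b = bt + bu\<close> \<open>e = et + eu\<close> \<open>m = mt + mu\<close> \<open>f = ft + fu\<close> pi(2-5) 1(3-6)
      by (intro exI[of _ "bs + bu + bL"]) (auto elim!: htype_cong)
  next
    case 2
    then show ?thesis by simp
  qed
next
  case (2 f0)
  from plug_inv[OF 2(3)] obtain \<Gamma>0 b0 e0 m0 f0 where "has_type \<Gamma>0 (TLam p s) TyN b0 e0 m0 f0" by blast
  then show ?thesis by (auto elim: TLamE)
qed

lemma step_e:
  assumes "has_type \<Gamma> (TSub t0 (PV x) u) \<sigma> b e m f" "bv t0 \<inter> (fv u \<union> {x}) = {}"
  shows "\<exists>e'. has_type \<Gamma> (nsubst t0 x u) \<sigma> b e' m f \<and> e = Suc e'"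
  using assms(1)
proof (cases rule: TSubE[consumes 1])
  case (1 Gt bt et mt ft A ep mp fp D bu eu mu fu)
  from 1(7) have pv: "restrict Gt (PV x) = ctx_one x A" "ep = Suc 0" "mp = 0" "fp = 0"
    by (auto elim: PVE)
  have "restrict Gt (PV x) x = A" using pv(1) by (simp add: ctx_one_def)
  then have A: "A = Gt x" by (simp add: restrict_def)
  have "has_type (ctx_union (remove Gt (PV x)) D) (nsubst t0 x u) \<sigma> (bt + bu) (et + eu) (mt + mu) (ft + fu)"
    using subst_typ(1)[OF 1(6), rule_format, OF assms(2)] 1(8) A by blast
  then show ?thesis using 1 pv by (intro exI[of _ "et + eu"]) simp
qed

lemma step_m:
  assumes "has_type \<Gamma> (TSub s (PP p1 p2) (plug L (TPair u1 u2))) \<sigma> b e m f"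
    "bvL L \<inter> fv s = {}" "pvars p2 \<inter> fv u1 = {}"
  shows "\<exists>m'. has_type \<Gamma> (plug L (TSub (TSub s p1 u1) p2 u2)) \<sigma> b e m' f \<and> m = Suc m'"
  using assms(1)
proof (cases rule: TSubE[consumes 1])
  case (1 Gt bt et mt ft A ep mp fp D bu eu mu fu)
  note hs = 1(6) and hp = 1(7) and hd = 1(8)
  from hp show ?thesis
  proof (cases rule: PPE[consumes 1])
    case (1 G1 A1 ep1 mp1 fp1 G2 A2 ep2 mp2 fp2)
    note c1 = 1
    have hX: "has_type D (plug L (TPair u1 u2)) (Prod A1 A2) bu eu mu fu"
      using mtype_single hd c1(2) by simp
    from plug_inv[OF hX] obtain \<Gamma>0 b0 e0 m0 f0 bL eL mL fL where
      pi: "has_type \<Gamma>0 (TPair u1 u2) (Prod A1 A2) b0 e0 m0 f0" "bu = b0 + bL" "eu = e0 + eL" "mu = m0 + mL" "fu = f0 + fL"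
      "\<forall>\<Theta> t' \<tau> b' e' m' f'. has_type (ctx_union \<Gamma>0 \<Theta>) t' \<tau> b' e' m' f' \<longrightarrow> ctx_dom \<Theta> \<inter> bvL L = {} \<longrightarrow>
          has_type (ctx_union D \<Theta>) (plug L t') \<tau> (b' + bL) (e' + eL) (m' + mL) (f' + fL)" by blast
    from pi(1) show ?thesis
    proof (cases rule: TPairE[consumes 1])
      case (1 D1 A1' b1 e1 m1 f1 D2 A2' b2 e2 m2 f2)
      have AA: "A1' = A1" "A2' = A2" using 1(2) by auto
      have hu1: "has_mtype D1 u1 A1 b1 e1 m1 f1" using 1(7) AA by simp
      have hu2: "has_mtype D2 u2 A2 b2 e2 m2 f2" using 1(8) AA by simp
      have d1: "ctx_dom G1 \<subseteq> pvars p1" using ptyp_dom[OF c1(6)] .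
      have d2: "ctx_dom G2 \<subseteq> pvars p2" using ptyp_dom[OF c1(7)] .
      have pw: "restrict Gt (PP p1 p2) y = G1 y + G2 y" for y using c1(1) by (simp add: ctx_union_def)
      have r1: "restrict Gt p1 = G1"
      proof
        fix y show "restrict Gt p1 y = G1 y"
          using pw[of y] d1 d2 c1(8) by (auto simp: restrict_def ctx_dom_def split: if_splits)
      qed
      have r2: "restrict Gt p2 = G2"
      proof
        fix y show "restrict Gt p2 y = G2 y"
          using pw[of y] d1 d2 c1(8) by (auto simp: restrict_def ctx_dom_def split: if_splits)
      qed
      have D1p2: "\<forall>y\<in>pvars p2. D1 y = {#}" using mdom[OF hu1] assms(3) by blast
      have m1: "has_type (ctx_union (remove Gt p1) D1) (TSub s p1 u1) \<sigma> (bt + b1) (et + e1 + ep1) (mt + m1 + mp1) (ft + f1 + fp1)"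
        using has_type_has_mtype.match[OF hs _ hu1] c1(6) r1 by simp
      have r3: "restrict (ctx_union (remove Gt p1) D1) p2 = G2"
      proof -
        have "restrict (remove Gt p1) p2 = restrict Gt p2" using c1(8) by (auto simp: restrict_def remove_def fun_eq_iff)
        then show ?thesis by (simp add: restrict_union_disj[OF D1p2] r2)
      qed
      have m2: "has_type (ctx_union (remove (ctx_union (remove Gt p1) D1) p2) D2) (TSub (TSub s p1 u1) p2 u2) \<sigma>
           (bt + b1 + b2) (et + e1 + ep1 + e2 + ep2) (mt + m1 + mp1 + m2 + mp2) (ft + f1 + fp1 + f2 + fp2)"
        using has_type_has_mtype.match[OF m1 _ hu2] c1(7) r3 by simp
      define \<Theta> where "\<Theta> = remove Gt (PP p1 p2)"
      have ceq: "ctx_union (remove (ctx_union (remove Gt p1) D1) p2) D2 = ctx_union \<Gamma>0 \<Theta>"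
        using D1p2 1(1) by (auto simp: \<Theta>_def ctx_union_def remove_def fun_eq_iff ac_simps)
      have dt: "ctx_dom \<Theta> \<inter> bvL L = {}"
      proof -
        have "ctx_dom \<Theta> \<subseteq> fv s" using typ_dom(1)[OF hs] by (auto simp: \<Theta>_def ctx_dom_def remove_def)
        then show ?thesis using assms(2) by blast
      qed
      have fin: "has_type (ctx_union D \<Theta>) (plug L (TSub (TSub s p1 u1) p2 u2)) \<sigma>
           (bt + b1 + b2 + bL) (et + e1 + ep1 + e2 + ep2 + eL) (mt + m1 + mp1 + m2 + mp2 + mL) (ft + f1 + fp1 + f2 + fp2 + fL)"
        using pi(6) m2[unfolded ceq] dt by blast
      have "\<Gamma> = ctx_union D \<Theta>" using \<open>\<Gamma> = ctx_union (remove Gt (PP p1 p2)) D\<close> by (simp add: \<Theta>_def ctx_union_comm)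
      then show ?thesis
        using fin \<open>b = bt + bu\<close> \<open>e = et + eu + ep\<close> \<open>m = mt + mu + mp\<close> \<open>f = ft + fu + fp\<close> pi(2-5) 1(3-6) c1(3-5)
        by (intro exI[of _ "mt + m1 + mp1 + m2 + mp2 + mL"]) (auto elim!: htype_cong)
    next
      case 2
      then show ?thesis by simp
    qed
  next
    case 2
    have hX: "has_type D (plug L (TPair u1 u2)) TyN bu eu mu fu"
      using mtype_single hd 2 by simp
    from plug_inv[OF hX] obtain \<Gamma>0 b0 e0 m0 f0 where "has_type \<Gamma>0 (TPair u1 u2) TyN b0 e0 m0 f0" by blast
    then show ?thesis by (auto elim: TPairE)
  qed
qed

definition cnt :: "kind \<Rightarrow> nat \<Rightarrow> nat \<Rightarrow> nat \<Rightarrow> nat \<Rightarrow> nat \<Rightarrow> nat \<Rightarrow> bool" where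
  "cnt R b e m b' e' m' \<longleftrightarrow> (R = KB \<longrightarrow> b = Suc b' \<and> e' = e \<and> m' = m)
           \<and> (R = KE \<longrightarrow> b' = b \<and> e = Suc e' \<and> m' = m)
           \<and> (R = KM \<longrightarrow> b' = b \<and> e' = e \<and> m = Suc m')"

lemma cnt_add: "cnt R b e m b' e' m' \<Longrightarrow> cnt R (b + x) (e + y) (m + z) (b' + x) (e' + y) (m' + z)"
  by (auto simp: cnt_def)

lemma main_lemma:
  "has_type \<Gamma> t \<sigma> b e m f \<Longrightarrow> (R, r) \<in> hsteps t \<Longrightarrow>
   \<exists>b' e' m'. has_type \<Gamma> r \<sigma> b' e' m' f \<and> cnt R b e m b' e' m'"
proof (induction t arbitrary: \<Gamma> \<sigma> b e m f R r)
  case (TVar x)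
  then show ?case by simp
next
  case (TPair t u)
  then show ?case by simp
next
  case (TLam p t)
  from TLam.prems(2) obtain t1 where st: "(R, t1) \<in> hsteps t" "alpha r (TLam p t1)" by auto
  from TLam.prems(1) show ?case
  proof (cases rule: TLamE[consumes 1])
    case (1 Gt \<tau> b0 e0 m0 f0 A ep mp fp)
    from TLam.IH[OF 1(7) st(1)] obtain b1 e1 m1 where
      ih: "has_type Gt t1 \<tau> b1 e1 m1 f0" "cnt R b0 e0 m0 b1 e1 m1" by blast
    have "has_type \<Gamma> (TLam p t1) \<sigma> (Suc b1) (e1 + ep) (m1 + mp) f"
      using has_type_has_mtype.abs[OF ih(1) 1(8)] 1 by simp
    moreover have "cnt R b e m (Suc b1) (e1 + ep) (m1 + mp)"
      using cnt_add[OF ih(2), of 1 ep mp] 1 by simp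
    ultimately show ?thesis using alpha_bwd[OF st(2)] by blast
  next
    case (2 Gt \<tau> f0)
    from TLam.IH[OF 2(4) st(1)] obtain b1 e1 m1 where
      ih: "has_type Gt t1 \<tau> b1 e1 m1 f0" "cnt R b e m b1 e1 m1" by blast
    have "has_type \<Gamma> (TLam p t1) \<sigma> b1 e1 m1 f"
      using has_type_has_mtype.abs_p[OF ih(1) 2(5) 2(6)] 2 by simp
    then show ?thesis using alpha_bwd[OF st(2)] ih(2) by blast
  qed
next
  case (TApp t u)
  from TApp.prems(2) consider
    (beta) L p s u' where "R = KB" "alpha (TApp t u) (TApp (plug L (TLam p s)) u')" "bvL L \<inter> fv u' = {}"
       "alpha r (plug L (TSub s p u'))"
  | (cl) t1 where "(R, t1) \<in> hsteps t" "alpha r (TApp t1 u)"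
    by auto
  then show ?case
  proof cases
    case beta
    from step_b[OF alpha_fwd[OF beta(2) TApp.prems(1)] beta(3)] obtain b' where
      "has_type \<Gamma> (plug L (TSub s p u')) \<sigma> b' e m f" "b = Suc b'" by blast
    then show ?thesis using alpha_bwd[OF beta(4)] beta(1) by (auto simp: cnt_def)
  next
    case cl
    from TApp.prems(1) show ?thesis
    proof (cases rule: TAppE[consumes 1])
      case (1 G A bt et mt ft D bu eu mu fu)
      from TApp.IH(1)[OF 1(6) cl(1)] obtain b1 e1 m1 where
        ih: "has_type G t1 (Arr A \<sigma>) b1 e1 m1 ft" "cnt R bt et mt b1 e1 m1" by blast
      have "has_type \<Gamma> (TApp t1 u) \<sigma> (b1 + bu) (e1 + eu) (m1 + mu) f"
        using has_type_has_mtype.app[OF ih(1) 1(7)] 1 by simp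
      moreover have "cnt R b e m (b1 + bu) (e1 + eu) (m1 + mu)"
        using cnt_add[OF ih(2), of bu eu mu] 1 by simp
      ultimately show ?thesis using alpha_bwd[OF cl(2)] by blast
    next
      case (2 f0)
      from TApp.IH(1)[OF 2(3) cl(1)] obtain b1 e1 m1 where
        ih: "has_type \<Gamma> t1 TyN b1 e1 m1 f0" "cnt R b e m b1 e1 m1" by blast
      have "has_type \<Gamma> (TApp t1 u) \<sigma> b1 e1 m1 f"
        using has_type_has_mtype.app_p[OF ih(1)] 2 by simp
      then show ?thesis using alpha_bwd[OF cl(2)] ih(2) by blast
    qed
  qed
next
  case (TSub t p u)
  from TSub.prems(2) consider
    (cl) t1 where "(R, t1) \<in> hsteps t" "alpha r (TSub t1 p u)"
  | (mstep) s p1 p2 L u1 u2 where "R = KM" "alpha (TSub t p u) (TSub s (PP p1 p2) (plug L (TPair u1 u2)))"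
       "bvL L \<inter> fv s = {}" "pvars p2 \<inter> fv u1 = {}" "alpha r (plug L (TSub (TSub s p1 u1) p2 u2))"
  | (estep) x t0 where "R = KE" "p = PV x" "alpha t t0" "bv t0 \<inter> (fv u \<union> {x}) = {}" "alpha r (nsubst t0 x u)"
  | (cr) u1 where "\<not> is_pvar p" "(R, u1) \<in> hsteps u" "alpha r (TSub t p u1)"
    by (auto split: if_splits)
  then show ?case
  proof cases
    case cl
    from TSub.prems(1) show ?thesis
    proof (cases rule: TSubE[consumes 1])
      case (1 Gt bt et mt ft A ep mp fp D bu eu mu fu)
      from TSub.IH(1)[OF 1(6) cl(1)] obtain b1 e1 m1 where
        ih: "has_type Gt t1 \<sigma> b1 e1 m1 ft" "cnt R bt et mt b1 e1 m1" by blast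
      have "has_type \<Gamma> (TSub t1 p u) \<sigma> (b1 + bu) (e1 + eu + ep) (m1 + mu + mp) f"
        using has_type_has_mtype.match[OF ih(1) 1(7) 1(8)] 1 by simp
      moreover have "cnt R b e m (b1 + bu) (e1 + eu + ep) (m1 + mu + mp)"
        using cnt_add[OF ih(2), of bu "eu + ep" "mu + mp"] 1 by (simp add: add.assoc)
      ultimately show ?thesis using alpha_bwd[OF cl(2)] by blast
    qed
  next
    case mstep
    from step_m[OF alpha_fwd[OF mstep(2) TSub.prems(1)] mstep(3,4)] obtain m' where
      "has_type \<Gamma> (plug L (TSub (TSub s p1 u1) p2 u2)) \<sigma> b e m' f" "m = Suc m'" by blast
    then show ?thesis using alpha_bwd[OF mstep(5)] mstep(1) by (auto simp: cnt_def)
  next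
    case estep
    from TSub.prems(1) show ?thesis
    proof (cases rule: TSubE[consumes 1])
      case (1 Gt bt et mt ft A ep mp fp D bu eu mu fu)
      have "has_type \<Gamma> (TSub t0 (PV x) u) \<sigma> b e m f"
        using has_type_has_mtype.match[OF alpha_fwd[OF estep(3) 1(6)] 1(7) 1(8)] 1 estep(2) by simp
      from step_e[OF this estep(4)] obtain e' where
        "has_type \<Gamma> (nsubst t0 x u) \<sigma> b e' m f" "e = Suc e'" by blast
      then show ?thesis using alpha_bwd[OF estep(5)] estep(1) by (auto simp: cnt_def)
    qed
  next
    case cr
    from TSub.prems(1) show ?thesis
    proof (cases rule: TSubE[consumes 1])
      case (1 Gt bt et mt ft A ep mp fp D bu eu mu fu)
      obtain q1 q2 where pq: "p = PP q1 q2" using cr(1) by (cases p) (auto simp: is_pvar_def)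
      obtain \<tau> where At: "A = {#\<tau>#}" using 1(7) unfolding pq by (auto elim: PPE)
      have hu: "has_type D u \<tau> bu eu mu fu" using mtype_single 1(8) At by simp
      from TSub.IH(2)[OF hu cr(2)] obtain b1 e1 m1 where
        ih: "has_type D u1 \<tau> b1 e1 m1 fu" "cnt R bu eu mu b1 e1 m1" by blast
      have "has_type \<Gamma> (TSub t p u1) \<sigma> (bt + b1) (et + e1 + ep) (mt + m1 + mp) f"
      proof -
        have hm: "has_mtype D u1 A b1 e1 m1 fu" using mtype_singleI[OF ih(1)] At by simp
        show ?thesis using has_type_has_mtype.match[OF 1(6) 1(7) hm] 1 by simp
      qed
      moreover have "cnt R b e m (bt + b1) (et + e1 + ep) (mt + m1 + mp)"
        using ih(2) 1 by (auto simp: cnt_def)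
      ultimately show ?thesis using alpha_bwd[OF cr(3)] by blast
    qed
  qed
qed

theorem lemma6:
  assumes "wf_trm t"
    and "has_type \<Gamma> t \<sigma> b e m f"
    and "(R, t') \<in> hsteps t"
  shows "\<exists>b' e' m'. has_type \<Gamma> t' \<sigma> b' e' m' f
           \<and> (R = KB \<longrightarrow> b = Suc b' \<and> e' = e \<and> m' = m)
           \<and> (R = KE \<longrightarrow> b' = b \<and> e = Suc e' \<and> m' = m)
           \<and> (R = KM \<longrightarrow> b' = b \<and> e' = e \<and> m = Suc m')"
  using main_lemma[OF assms(2,3)] unfolding cnt_def .

end
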